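(* (i) The cyclic Kautz digraph $CK(3,\ell)$ with $\ell\ge 3$, $\ell\neq 4$, has diameter $2\ell-1$, and for every $d\ge 3$ the cyclic Kautz digraph $CK(d,3)$ has diameter $2\cdot 3-1=5$. (ii) The cyclic Kautz digraph $CK(3,4)$ has diameter $6$.
   Context: The cyclic Kautz digraph $CK(d,\ell)$ has vertex set $\{x_1\ldots x_\ell\in\mathbb Z_{d+1}^\ell : x_i\neq x_{i+1}\ (1\le i\le \ell-1),\ x_\ell\neq x_1\}$ and arcs $x_1x_2\ldots x_\ell\to x_2\ldots x_\ell y$ for every $y\in\mathbb Z_{d+1}$ with $y\neq x_2,x_\ell$. The diameter is the maximum directed distance between ordered pairs of vertices. *)

theory Defs
  imports Main "HOL-Library.Extended_Nat"
begin

definition ck_vertices :: "nat \<Rightarrow> nat \<Rightarrow> nat list set" where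
  "ck_vertices d l = {xs. length xs = l \<and> set xs \<subseteq> {0..d}
      \<and> (\<forall>i. Suc i < l \<longrightarrow> xs ! i \<noteq> xs ! Suc i)
      \<and> last xs \<noteq> hd xs}"

definition ck_arcs :: "nat \<Rightarrow> nat \<Rightarrow> (nat list \<times> nat list) set" where
  "ck_arcs d l = {(xs, tl xs @ [y]) | xs y. xs \<in> ck_vertices d l \<and> y \<le> d
      \<and> y \<noteq> xs ! 1 \<and> y \<noteq> last xs}"

text \<open>Directed distance (\<infinity> if unreachable): least number of arcs of a directed walk.\<close>
definition ck_dist :: "nat \<Rightarrow> nat \<Rightarrow> nat list \<Rightarrow> nat list \<Rightarrow> enat" where
  "ck_dist d l u v = Inf {enat n | n. (u, v) \<in> ck_arcs d l ^^ n}"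

definition ck_diameter :: "nat \<Rightarrow> nat \<Rightarrow> enat" where
  "ck_diameter d l = Sup {ck_dist d l u v | u v. u \<in> ck_vertices d l \<and> v \<in> ck_vertices d l}"

end

theory Submission
  imports Defs
begin

definition valid :: "nat \<Rightarrow> nat \<Rightarrow> nat \<Rightarrow> (nat \<Rightarrow> nat) \<Rightarrow> bool" where
  "valid d l N f \<longleftrightarrow> (\<forall>i<N. f i \<le> d) \<and> (\<forall>i. Suc i < N \<longrightarrow> f i \<noteq> f (Suc i))
     \<and> (\<forall>i. i + (l - 1) < N \<longrightarrow> f i \<noteq> f (i + (l - 1)))"

definition ckw :: "(nat \<Rightarrow> nat) \<Rightarrow> nat \<Rightarrow> nat \<Rightarrow> nat list" where
  "ckw f n l = map (\<lambda>i. f (n+i)) [0..<l]"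

lemma ckw_nth[simp]: "i < l \<Longrightarrow> ckw f n l ! i = f (n+i)"
  by (simp add: ckw_def)

lemma ckw_len[simp]: "length (ckw f n l) = l"
  by (simp add: ckw_def)

lemma ckw_ne: "l \<ge> 1 \<Longrightarrow> ckw f n l \<noteq> []"
  unfolding ckw_def by simp

lemma valid_win: "valid d l N f \<Longrightarrow> i + (l - 1) < N \<Longrightarrow> j = i + (l - 1) \<Longrightarrow> f i \<noteq> f j"
  unfolding valid_def by blast

lemma valid_adj: "valid d l N f \<Longrightarrow> Suc i < N \<Longrightarrow> j = Suc i \<Longrightarrow> f i \<noteq> f j"
  unfolding valid_def by blast

lemma valid_bd: "valid d l N f \<Longrightarrow> i < N \<Longrightarrow> f i \<le> d"
  unfolding valid_def by blast

lemma valid_mono: "valid d l N f \<Longrightarrow> M \<le> N \<Longrightarrow> valid d l M f"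
  unfolding valid_def by auto

lemma vert_ckw:
  assumes "l \<ge> 3" "valid d l N f" "n + l \<le> N"
  shows "ckw f n l \<in> ck_vertices d l"
proof -
  have ne: "ckw f n l \<noteq> []" using assms(1) ckw_ne by simp
  have "hd (ckw f n l) = f n" using ne assms(1) by (simp add: hd_conv_nth)
  moreover have "last (ckw f n l) = f (n + (l - 1))" using ne assms(1) by (simp add: last_conv_nth)
  moreover have "f n \<noteq> f (n + (l - 1))" using assms unfolding valid_def by auto
  moreover have "set (ckw f n l) \<subseteq> {0..d}" using assms unfolding valid_def ckw_def by auto
  moreover have "\<forall>i. Suc i < l \<longrightarrow> ckw f n l ! i \<noteq> ckw f n l ! Suc i"
    using assms unfolding valid_def by auto
  ultimately show ?thesis unfolding ck_vertices_def by auto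
qed

lemma ckw_shift:
  assumes "l \<ge> 3"
  shows "ckw f (Suc n) l = tl (ckw f n l) @ [f (l+n)]"
proof (rule nth_equalityI)
  show "length (ckw f (Suc n) l) = length (tl (ckw f n l) @ [f (l + n)])" using assms by simp
next
  fix i assume "i < length (ckw f (Suc n) l)"
  hence i: "i < l" by simp
  show "ckw f (Suc n) l ! i = (tl (ckw f n l) @ [f (l + n)]) ! i"
  proof (cases "i < l - 1")
    case True
    then show ?thesis using i by (simp add: nth_append nth_tl)
  next
    case False
    then have "i = l - 1" using i by simp
    then show ?thesis using assms by (simp add: nth_append add.commute)
  qed
qed

lemma walk_of_valid:
  assumes "l \<ge> 3" "valid d l (l+n) f"
  shows "(ckw f 0 l, ckw f n l) \<in> ck_arcs d l ^^ n"
  using assms(2)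
proof (induction n)
  case 0
  then show ?case by simp
next
  case (Suc n)
  have v: "valid d l (l+n) f" using Suc.prems valid_mono by fastforce
  have IH: "(ckw f 0 l, ckw f n l) \<in> ck_arcs d l ^^ n" using Suc.IH v by blast
  have w: "ckw f n l \<in> ck_vertices d l" using vert_ckw[OF assms(1) v] by simp
  have y1: "f (l+n) \<le> d" using Suc.prems unfolding valid_def by auto
  have "f (n+1) \<noteq> f (l + n)" by (rule valid_win[OF Suc.prems]) (use assms(1) in auto)
  hence y2: "f (l+n) \<noteq> ckw f n l ! 1" using assms(1) by (simp add: add.commute)
  have ne: "ckw f n l \<noteq> []" using assms(1) ckw_ne by simp
  have "f (n + (l - 1)) \<noteq> f (l + n)" by (rule valid_adj[OF Suc.prems]) (use assms(1) in auto)
  hence y3: "f (l+n) \<noteq> last (ckw f n l)" using ne assms(1) by (simp add: last_conv_nth)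
  have "(ckw f n l, ckw f (Suc n) l) \<in> ck_arcs d l"
    unfolding ck_arcs_def ckw_shift[OF assms(1)] using w y1 y2 y3 by blast
  then show ?case using IH by auto
qed

lemma ckw_cong: "(\<And>i. i < l \<Longrightarrow> f (n+i) = g (n+i)) \<Longrightarrow> ckw f n l = ckw g n l"
  unfolding ckw_def by simp

lemma valid_of_walk:
  assumes "l \<ge> 3" "u \<in> ck_vertices d l" "(u, v) \<in> ck_arcs d l ^^ n"
  shows "\<exists>f. valid d l (l+n) f \<and> ckw f 0 l = u \<and> ckw f n l = v"
  using assms(3)
proof (induction n arbitrary: v)
  case 0
  then have uv: "v = u" by simp
  have lu: "length u = l" using assms(2) unfolding ck_vertices_def by simp
  have ne: "u \<noteq> []" using lu assms(1) by auto
  have hl0: "last u \<noteq> hd u" using assms(2) unfolding ck_vertices_def by simp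
  have hl: "u ! 0 \<noteq> u ! (l - 1)" using hl0 ne lu by (simp add: hd_conv_nth last_conv_nth)
  have su: "set u \<subseteq> {0..d}" using assms(2) unfolding ck_vertices_def by simp
  have "valid d l (l+0) (\<lambda>i. u ! i)"
    unfolding valid_def
  proof (intro conjI allI impI)
    fix i assume "i < l + 0" hence "u ! i \<in> set u" using lu by simp
    thus "u ! i \<le> d" using su by auto
  next
    fix i assume "Suc i < l + 0" thus "u ! i \<noteq> u ! Suc i" using assms(2) unfolding ck_vertices_def by simp
  next
    fix i assume "i + (l - 1) < l + 0" hence "i = 0" using assms(1) by simp
    thus "u ! i \<noteq> u ! (i + (l - 1))" using hl by simp
  qed
  moreover have "ckw (\<lambda>i. u ! i) 0 l = u" by (rule nth_equalityI) (simp_all add: lu)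
  ultimately show ?case using uv by blast
next
  case (Suc n)
  then obtain w where uw: "(u, w) \<in> ck_arcs d l ^^ n" and wv: "(w, v) \<in> ck_arcs d l" by auto
  obtain f where f: "valid d l (l+n) f" "ckw f 0 l = u" "ckw f n l = w" using Suc.IH uw by blast
  from wv obtain y where wV: "w \<in> ck_vertices d l" and y: "y \<le> d" "y \<noteq> w ! 1" "y \<noteq> last w" and vdef: "v = tl w @ [y]"
    unfolding ck_arcs_def by blast
  define g where "g = f(l+n := y)"
  have gf: "g i = f i" if "i \<noteq> l + n" for i using that unfolding g_def by simp
  have gy: "g (l+n) = y" unfolding g_def by simp
  have ne: "w \<noteq> []" using f(3) assms(1) ckw_ne by fastforce
  have lastw: "last w = f (n + (l - 1))" using ne f(3)[symmetric] assms(1) by (simp add: last_conv_nth)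
  have w1: "w ! 1 = f (n+1)" using f(3)[symmetric] assms(1) by simp
  have gv: "valid d l (l + Suc n) g"
    unfolding valid_def
  proof (intro conjI allI impI)
    fix i assume i: "i < l + Suc n"
    show "g i \<le> d"
    proof (cases "i = l + n")
      case True thus ?thesis using gy y by simp
    next
      case False thus ?thesis using gf valid_bd[OF f(1)] i by simp
    qed
  next
    fix i assume a: "Suc i < l + Suc n"
    show "g i \<noteq> g (Suc i)"
    proof (cases "Suc i = l + n")
      case True
      then have "i = n + (l - 1)" using assms(1) by simp
      then show ?thesis using True y(3) lastw gy gf by (simp add: add.commute)
    next
      case False
      then have "Suc i < l + n" using a by simp
      then show ?thesis using valid_adj[OF f(1)] gf by simp
    qed
  next
    fix i assume a: "i + (l - 1) < l + Suc n"
    show "g i \<noteq> g (i + (l - 1))"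
    proof (cases "i + (l - 1) = l + n")
      case True
      then have "i = n + 1" using assms(1) by simp
      then show ?thesis using True y(2) w1 assms(1) gy gf by (simp add: add.commute)
    next
      case False
      then have "i + (l - 1) < l + n" using a by simp
      then show ?thesis using valid_win[OF f(1)] gf by simp
    qed
  qed
  have g0: "ckw g 0 l = u" unfolding f(2)[symmetric] by (rule ckw_cong) (simp add: gf)
  have "ckw g n l = w" unfolding f(3)[symmetric] by (rule ckw_cong) (simp add: gf)
  hence "ckw g (Suc n) l = v" using ckw_shift[OF assms(1), of g n] vdef gy by simp
  then show ?case using gv g0 by blast
qed

lemma dist_le: "(u,v) \<in> ck_arcs d l ^^ n \<Longrightarrow> ck_dist d l u v \<le> enat n"
  unfolding ck_dist_def by (rule Inf_lower) blast

lemma dist_ge: assumes a: "\<forall>n<N. (u,v) \<notin> ck_arcs d l ^^ n" shows "enat N \<le> ck_dist d l u v"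
  unfolding ck_dist_def
proof (rule Inf_greatest)
  fix x assume "x \<in> {enat n |n. (u, v) \<in> ck_arcs d l ^^ n}"
  then obtain n where x: "x = enat n" "(u, v) \<in> ck_arcs d l ^^ n" by blast
  then have "\<not> n < N" using a by blast
  then show "enat N \<le> x" using x by simp
qed

lemma diam_eq:
  assumes up: "\<And>u v. u \<in> ck_vertices d l \<Longrightarrow> v \<in> ck_vertices d l \<Longrightarrow> \<exists>n\<le>D. (u,v) \<in> ck_arcs d l ^^ n"
    and lo: "u0 \<in> ck_vertices d l" "v0 \<in> ck_vertices d l" "\<forall>n<D. (u0,v0) \<notin> ck_arcs d l ^^ n"
  shows "ck_diameter d l = enat D"
proof (rule antisym)
  show "ck_diameter d l \<le> enat D"
    unfolding ck_diameter_def
  proof (rule Sup_least)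
    fix x assume "x \<in> {ck_dist d l u v |u v. u \<in> ck_vertices d l \<and> v \<in> ck_vertices d l}"
    then obtain u v where x: "x = ck_dist d l u v" "u \<in> ck_vertices d l" "v \<in> ck_vertices d l" by blast
    then obtain n where "n \<le> D" "(u,v) \<in> ck_arcs d l ^^ n" using up by blast
    then have "ck_dist d l u v \<le> enat n" "enat n \<le> enat D" using dist_le by auto
    then show "x \<le> enat D" using x(1) by (rule_tac order_trans) auto
  qed
next
  have "enat D \<le> ck_dist d l u0 v0" using dist_ge lo(3) by blast
  also have "\<dots> \<le> ck_diameter d l" unfolding ck_diameter_def by (rule Sup_upper) (use lo in blast)
  finally show "enat D \<le> ck_diameter d l" .
qed

lemma vertD:
  assumes "xs \<in> ck_vertices d l" "l \<ge> 1"
  shows "length xs = l" "\<And>i. i < l \<Longrightarrow> xs!i \<le> d" "\<And>i. Suc i < l \<Longrightarrow> xs!i \<noteq> xs!Suc i"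
    "xs!0 \<noteq> xs!(l-1)"
proof -
  have A: "length xs = l" "set xs \<subseteq> {0..d}" "\<forall>i. Suc i < l \<longrightarrow> xs ! i \<noteq> xs ! Suc i"
     "last xs \<noteq> hd xs" using assms(1) unfolding ck_vertices_def by blast+
  show l: "length xs = l" by (rule A(1))
  show "\<And>i. i < l \<Longrightarrow> xs!i \<le> d"
  proof -
    fix i assume "i < l" hence "xs ! i \<in> set xs" using l by simp
    thus "xs ! i \<le> d" using A(2) by auto
  qed
  show "\<And>i. Suc i < l \<Longrightarrow> xs!i \<noteq> xs!Suc i" using A(3) by blast
  have ne: "xs \<noteq> []" using l assms(2) by auto
  show "xs!0 \<noteq> xs!(l-1)" using A(4) ne l by (simp add: hd_conv_nth last_conv_nth)
qed

lemma glue: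
  assumes l3: "l \<ge> 3" and m: "1 \<le> m" "m \<le> l" and uV: "u \<in> ck_vertices d l" and vV: "v \<in> ck_vertices d l"
  and Z1: "\<forall>j. j+1 < m \<longrightarrow> z j \<le> d"
  and Z2: "\<forall>j. j+2 < m \<longrightarrow> z j \<noteq> z (Suc j)"
  and Z3: "2 \<le> m \<longrightarrow> z 0 \<noteq> u!(l-1) \<and> z (m-2) \<noteq> v!0"
  and Z4: "m = 1 \<longrightarrow> u!(l-1) \<noteq> v!0"
  and Z5: "\<forall>j. j+1 < m \<longrightarrow> z j \<noteq> u!(Suc j) \<and> z j \<noteq> v!(l - m + j)"
  and Z6: "\<forall>i. m \<le> i \<longrightarrow> i < l \<longrightarrow> u!i \<noteq> v!(i-m)"
  shows "(u, v) \<in> ck_arcs d l ^^ (l - 1 + m)"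
proof -
  define f where "f i = (if i < l then u!i else if i < l+m-1 then z (i-l) else v!(i-(l+m-1)))" for i
  have fu: "f i = u!i" if "i < l" for i using that f_def by simp
  have fz: "f i = z (i-l)" if "l \<le> i" "i < l+m-1" for i using that f_def by simp
  have fv: "f i = v!(i-(l+m-1))" if "l+m-1 \<le> i" for i
  proof -
    have "\<not> i < l" "\<not> i < l+m-1" using that m by auto
    then show ?thesis using f_def by simp
  qed
  have l1: "l \<ge> 1" using l3 by simp
  note U = vertD[OF uV l1] and V = vertD[OF vV l1]
  have val: "valid d l (l + (l - 1 + m)) f"
    unfolding valid_def
  proof (intro conjI allI impI)
    fix i assume i: "i < l + (l - 1 + m)"
    show "f i \<le> d"
    proof -
      consider "i < l" | "l \<le> i" "i < l+m-1" | "l+m-1 \<le> i" by linarith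
      then show ?thesis
      proof cases
        case 1 then show ?thesis using fu U(2) by simp
      next
        case 2 then show ?thesis using fz Z1 by simp
      next
        case 3 then show ?thesis using fv V(2)[of "i-(l+m-1)"] i l3 m by simp
      qed
    qed
  next
    fix i assume i: "Suc i < l + (l - 1 + m)"
    consider "Suc i < l" | "Suc i = l" | "l \<le> i" "Suc i < l+m-1" | "l \<le> i" "Suc i = l+m-1" | "l+m-1 \<le> i"
      by linarith
    then show "f i \<noteq> f (Suc i)"
    proof cases
      case 1 then show ?thesis using fu U(3) by simp
    next
      case 2
      show ?thesis
      proof (cases "m = 1")
        case True
        then have "f (Suc i) = v!0" using fv 2 by simp
        moreover have "f i = u!(l-1)"
        proof -
          have "i = l - 1" using 2 by simp
          moreover have "f i = u!i" using fu[of i] 2 by simp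
          ultimately show ?thesis by simp
        qed
        ultimately show ?thesis using Z4 True by simp
      next
        case False
        then have "f (Suc i) = z 0" using fz[of "Suc i"] 2 m by simp
        moreover have "f i = u!(l-1)"
        proof -
          have "i = l - 1" using 2 by simp
          moreover have "f i = u!i" using fu[of i] 2 by simp
          ultimately show ?thesis by simp
        qed
        ultimately show ?thesis using Z3 False m by simp
      qed
    next
      case 3
      then have "f i = z (i-l)" "f (Suc i) = z (Suc (i-l))" using fz by (simp_all add: Suc_diff_le)
      moreover have "(i-l)+2 < m" using 3 by simp
      ultimately show ?thesis using Z2 by simp
    next
      case 4
      then have e: "i - l = m - 2" by simp
      have "f i = z (i-l)" using fz 4 by simp
      then have "f i = z (m-2)" using e by simp
      moreover have "f (Suc i) = v!0" using fv 4 by simp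
      moreover have "2 \<le> m" using 4 by simp
      ultimately show ?thesis using Z3 by simp
    next
      case 5
      then have "f i = v!(i-(l+m-1))" "f (Suc i) = v!(Suc (i-(l+m-1)))" using fv by (simp_all add: Suc_diff_le)
      moreover have "Suc (i-(l+m-1)) < l" using 5 i by simp
      ultimately show ?thesis using V(3) by simp
    qed
  next
    fix i assume i: "i + (l - 1) < l + (l - 1 + m)"
    consider "i = 0" | "0 < i" "i < m" | "0 < i" "m \<le> i" "i < l" | "l \<le> i" "i < l+m-1" | "i = l+m-1"
      using i by linarith
    then show "f i \<noteq> f (i + (l - 1))"
    proof cases
      case 1 then show ?thesis using fu U(4) l3 by simp
    next
      case 2
      then have "f i = u!(Suc (i-1))" using fu m by simp
      moreover have "f (i + (l-1)) = z (i-1)" using fz[of "i+(l-1)"] 2 l3 by simp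
      moreover have "(i-1)+1 < m" using 2 by simp
      then have "z (i-1) \<noteq> u!(Suc (i-1))" using Z5 by blast
      ultimately show ?thesis by simp
    next
      case 3
      then have "f i = u!i" using fu by simp
      moreover have "f (i + (l-1)) = v!(i-m)" using fv[of "i+(l-1)"] 3 l3 by simp
      ultimately show ?thesis using Z6 3 by simp
    next
      case 4
      then have "f i = z (i-l)" using fz by simp
      moreover have "f (i + (l-1)) = v!(l - m + (i-l))" using fv[of "i+(l-1)"] 4 l3 m by simp
      moreover have "(i-l)+1 < m" using 4 by simp
      then have "z (i-l) \<noteq> v!(l - m + (i-l))" using Z5 by blast
      ultimately show ?thesis by simp
    next
      case 5
      then have "f i = v!0" using fv by simp
      moreover have "f (i + (l-1)) = v!(l-1)" using fv[of "i+(l-1)"] 5 l3 by simp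
      ultimately show ?thesis using V(4) by simp
    qed
  qed
  have "ckw f 0 l = u"
  proof (rule nth_equalityI)
    fix i assume "i < length (ckw f 0 l)" thus "ckw f 0 l ! i = u ! i" using fu by simp
  qed (simp add: U(1))
  moreover have "ckw f (l - 1 + m) l = v"
  proof (rule nth_equalityI)
    fix i assume i: "i < length (ckw f (l - 1 + m) l)"
    have "f (l - 1 + m + i) = v ! (l - 1 + m + i - (l + m - 1))" by (rule fv) (use m in simp)
    moreover have "l - 1 + m + i - (l + m - 1) = i" using m l3 by simp
    ultimately show "ckw f (l - 1 + m) l ! i = v ! i" using i by simp
  qed (simp add: V(1))
  ultimately show ?thesis using walk_of_valid[OF l3 val] by simp
qed

definition avail :: "nat \<Rightarrow> nat \<Rightarrow> nat \<Rightarrow> nat set" where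
  "avail d p q = {x. x \<le> d \<and> x \<noteq> p \<and> x \<noteq> q}"

lemma two_avail0: "\<exists>x y. x \<le> 3 \<and> y \<le> (3::nat) \<and> x \<noteq> p \<and> x \<noteq> q \<and> y \<noteq> p \<and> y \<noteq> q \<and> x \<noteq> y"
proof -
  have c: "(p \<noteq> 0 \<and> q \<noteq> 0 \<and> p \<noteq> 1 \<and> q \<noteq> 1) \<or> (p \<noteq> 0 \<and> q \<noteq> 0 \<and> p \<noteq> 2 \<and> q \<noteq> 2)
    \<or> (p \<noteq> 0 \<and> q \<noteq> 0 \<and> p \<noteq> 3 \<and> q \<noteq> 3) \<or> (p \<noteq> 1 \<and> q \<noteq> 1 \<and> p \<noteq> 2 \<and> q \<noteq> 2)
    \<or> (p \<noteq> 1 \<and> q \<noteq> 1 \<and> p \<noteq> 3 \<and> q \<noteq> 3) \<or> (p \<noteq> 2 \<and> q \<noteq> 2 \<and> p \<noteq> 3 \<and> q \<noteq> 3)" by linarith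
  then show ?thesis
  proof (elim disjE)
    assume h: "p \<noteq> 0 \<and> q \<noteq> 0 \<and> p \<noteq> 1 \<and> q \<noteq> 1" show ?thesis by (rule exI[of _ 0], rule exI[of _ 1]) (use h in simp)
  next
    assume h: "p \<noteq> 0 \<and> q \<noteq> 0 \<and> p \<noteq> 2 \<and> q \<noteq> 2" show ?thesis by (rule exI[of _ 0], rule exI[of _ 2]) (use h in simp)
  next
    assume h: "p \<noteq> 0 \<and> q \<noteq> 0 \<and> p \<noteq> 3 \<and> q \<noteq> 3" show ?thesis by (rule exI[of _ 0], rule exI[of _ 3]) (use h in simp)
  next
    assume h: "p \<noteq> 1 \<and> q \<noteq> 1 \<and> p \<noteq> 2 \<and> q \<noteq> 2" show ?thesis by (rule exI[of _ 1], rule exI[of _ 2]) (use h in simp)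
  next
    assume h: "p \<noteq> 1 \<and> q \<noteq> 1 \<and> p \<noteq> 3 \<and> q \<noteq> 3" show ?thesis by (rule exI[of _ 1], rule exI[of _ 3]) (use h in simp)
  next
    assume h: "p \<noteq> 2 \<and> q \<noteq> 2 \<and> p \<noteq> 3 \<and> q \<noteq> 3" show ?thesis by (rule exI[of _ 2], rule exI[of _ 3]) (use h in simp)
  qed
qed

lemma two_avail: "d \<ge> 3 \<Longrightarrow> \<exists>x y. x \<in> avail d p q \<and> y \<in> avail d p q \<and> x \<noteq> y"
proof -
  assume d: "d \<ge> 3"
  from two_avail0[of p q] obtain x y where h: "x \<le> 3 \<and> y \<le> (3::nat) \<and> x \<noteq> p \<and> x \<noteq> q \<and> y \<noteq> p \<and> y \<noteq> q \<and> x \<noteq> y" by (elim exE)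
  have "x \<in> avail d p q \<and> y \<in> avail d p q \<and> x \<noteq> y" using h d unfolding avail_def by simp
  then show ?thesis by blast
qed

lemma path:
  assumes d: "d \<ge> 3"
  shows "(\<exists>z. (\<forall>j<M. z j \<in> avail d (p j) (q j)) \<and> (\<forall>j. Suc j < M \<longrightarrow> z j \<noteq> z (Suc j)) \<and> z 0 \<noteq> a \<and> z (M-1) \<noteq> b)
       \<or> (\<exists>c. c 0 = a \<and> c M = b \<and> (\<forall>j<M. c j \<noteq> c (Suc j) \<and> avail d (p j) (q j) = {c j, c (Suc j)}))"
proof (induction M arbitrary: a p q)
  case 0
  have "\<exists>z. (\<forall>j<(0::nat). z j \<in> avail d (p j) (q j)) \<and> (\<forall>j. Suc j < 0 \<longrightarrow> z j \<noteq> z (Suc j)) \<and> z 0 \<noteq> a \<and> z (0-1) \<noteq> (b::nat)"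
    by (rule exI[of _ "\<lambda>_. a+b+1"]) simp
  then show ?case by (rule disjI1)
next
  case (Suc M)
  define A where "A = avail d (p 0) (q 0)"
  obtain x0 y0 where xy0: "x0 \<in> A" "y0 \<in> A" "x0 \<noteq> y0" using two_avail[OF d, of "p 0" "q 0"] unfolding A_def by blast
  show ?case
  proof (cases "M = 0")
    case True
    show ?thesis
    proof (cases "\<exists>x\<in>A. x \<noteq> a \<and> x \<noteq> b")
      case True
      then obtain x where x: "x \<in> A" "x \<noteq> a" "x \<noteq> b" by blast
      have "\<exists>z. (\<forall>j<Suc M. z j \<in> avail d (p j) (q j)) \<and> (\<forall>j. Suc j < Suc M \<longrightarrow> z j \<noteq> z (Suc j))
        \<and> z 0 \<noteq> a \<and> z (Suc M - 1) \<noteq> b" by (rule exI[of _ "\<lambda>_. x"]) (use x \<open>M = 0\<close> A_def in auto)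
      then show ?thesis by (rule disjI1)
    next
      case False
      then have sub: "A \<subseteq> {a, b}" by blast
      then have ab: "a \<noteq> b" "A = {a, b}" using xy0 by blast+
      define c where "c j = (if j = 0 then a else b)" for j :: nat
      have "c 0 = a \<and> c (Suc M) = b \<and> (\<forall>j<Suc M. c j \<noteq> c (Suc j) \<and> avail d (p j) (q j) = {c j, c (Suc j)})"
        using ab \<open>M = 0\<close> A_def c_def by auto
      then have "\<exists>c. c 0 = a \<and> c (Suc M) = b \<and> (\<forall>j<Suc M. c j \<noteq> c (Suc j) \<and> avail d (p j) (q j) = {c j, c (Suc j)})" by blast
      then show ?thesis by (rule disjI2)
    qed
  next
    case False
    then have M0: "M > 0" by simp
    define p' where "p' j = p (Suc j)" for j
    define q' where "q' j = q (Suc j)" for j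
    have L: "\<exists>z. (\<forall>j<Suc M. z j \<in> avail d (p j) (q j)) \<and> (\<forall>j. Suc j < Suc M \<longrightarrow> z j \<noteq> z (Suc j)) \<and> z 0 \<noteq> a \<and> z (Suc M - 1) \<noteq> b"
      if x: "x \<in> A" "x \<noteq> a" and z': "\<forall>j<M. z' j \<in> avail d (p' j) (q' j)" "\<forall>j. Suc j < M \<longrightarrow> z' j \<noteq> z' (Suc j)"
        "z' 0 \<noteq> x" "z' (M-1) \<noteq> b" for x z'
    proof -
      define z where "z j = (if j = 0 then x else z' (j - 1))" for j
      have "\<forall>j<Suc M. z j \<in> avail d (p j) (q j)"
      proof (intro allI impI)
        fix j assume j: "j < Suc M"
        show "z j \<in> avail d (p j) (q j)"
        proof (cases j)
          case 0 then show ?thesis using x A_def z_def by simp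
        next
          case (Suc j') then show ?thesis using z'(1) j z_def p'_def q'_def by simp
        qed
      qed
      moreover have "\<forall>j. Suc j < Suc M \<longrightarrow> z j \<noteq> z (Suc j)"
      proof (intro allI impI)
        fix j assume j: "Suc j < Suc M"
        show "z j \<noteq> z (Suc j)"
        proof (cases j)
          case 0 then show ?thesis using z'(3) z_def by auto
        next
          case (Suc j') then show ?thesis using z'(2) j z_def by simp
        qed
      qed
      moreover have "z 0 \<noteq> a" using x z_def by simp
      moreover have "z (Suc M - 1) \<noteq> b" using z'(4) M0 z_def by simp
      ultimately show ?thesis by blast
    qed
    show ?thesis
    proof (cases "\<exists>x y. x \<in> A \<and> y \<in> A \<and> x \<noteq> a \<and> y \<noteq> a \<and> x \<noteq> y")
      case True
      then obtain x y where xy: "x \<in> A" "y \<in> A" "x \<noteq> a" "y \<noteq> a" "x \<noteq> y" by blast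
      note IHx = Suc.IH[of p' q' x]
      note IHy = Suc.IH[of p' q' y]
      show ?thesis
      proof (cases "\<exists>z. (\<forall>j<M. z j \<in> avail d (p' j) (q' j)) \<and> (\<forall>j. Suc j < M \<longrightarrow> z j \<noteq> z (Suc j)) \<and> z 0 \<noteq> x \<and> z (M-1) \<noteq> b")
        case True
        then obtain z' where "\<forall>j<M. z' j \<in> avail d (p' j) (q' j)" "\<forall>j. Suc j < M \<longrightarrow> z' j \<noteq> z' (Suc j)" "z' 0 \<noteq> x" "z' (M-1) \<noteq> b" by blast
        from L[OF xy(1) xy(3) this] show ?thesis by (rule disjI1)
      next
        case nx: False
        show ?thesis
        proof (cases "\<exists>z. (\<forall>j<M. z j \<in> avail d (p' j) (q' j)) \<and> (\<forall>j. Suc j < M \<longrightarrow> z j \<noteq> z (Suc j)) \<and> z 0 \<noteq> y \<and> z (M-1) \<noteq> b")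
          case True
          then obtain z' where "\<forall>j<M. z' j \<in> avail d (p' j) (q' j)" "\<forall>j. Suc j < M \<longrightarrow> z' j \<noteq> z' (Suc j)" "z' 0 \<noteq> y" "z' (M-1) \<noteq> b" by blast
          from L[OF xy(2) xy(4) this] show ?thesis by (rule disjI1)
        next
          case ny: False
          obtain c1 where c1: "c1 0 = x" "c1 M = b" "\<forall>j<M. c1 j \<noteq> c1 (Suc j) \<and> avail d (p' j) (q' j) = {c1 j, c1 (Suc j)}"
            using IHx nx by blast
          obtain c2 where c2: "c2 0 = y" "c2 M = b" "\<forall>j<M. c2 j \<noteq> c2 (Suc j) \<and> avail d (p' j) (q' j) = {c2 j, c2 (Suc j)}"
            using IHy ny by blast
          have "j \<le> M \<Longrightarrow> c1 j \<noteq> c2 j" for j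
          proof (induction j)
            case 0 then show ?case using c1 c2 xy by simp
          next
            case (Suc j)
            then have j: "j < M" by simp
            have "{c1 j, c1 (Suc j)} = {c2 j, c2 (Suc j)}" using c1(3)[rule_format, OF j] c2(3)[rule_format, OF j] by simp
            moreover have "c1 j \<noteq> c2 j" using Suc by simp
            moreover have "c1 j \<noteq> c1 (Suc j)" "c2 j \<noteq> c2 (Suc j)" using c1(3) c2(3) j by auto
            ultimately show ?case by (auto simp: doubleton_eq_iff)
          qed
          then have "c1 M \<noteq> c2 M" by simp
          then show ?thesis using c1 c2 by simp
        qed
      qed
    next
      case False
      obtain x where x: "x \<in> A" "x \<noteq> a" using xy0 by blast
      have allx: "w \<in> A \<Longrightarrow> w \<noteq> a \<Longrightarrow> w = x" for w using False x by blast
      have Aeq: "A = {a, x}" using allx xy0 x by blast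
      show ?thesis
      proof (cases "\<exists>z. (\<forall>j<M. z j \<in> avail d (p' j) (q' j)) \<and> (\<forall>j. Suc j < M \<longrightarrow> z j \<noteq> z (Suc j)) \<and> z 0 \<noteq> x \<and> z (M-1) \<noteq> b")
        case True
        then obtain z' where "\<forall>j<M. z' j \<in> avail d (p' j) (q' j)" "\<forall>j. Suc j < M \<longrightarrow> z' j \<noteq> z' (Suc j)" "z' 0 \<noteq> x" "z' (M-1) \<noteq> b" by blast
        from L[OF x this] show ?thesis by (rule disjI1)
      next
        case nx: False
        obtain c' where c': "c' 0 = x" "c' M = b" "\<forall>j<M. c' j \<noteq> c' (Suc j) \<and> avail d (p' j) (q' j) = {c' j, c' (Suc j)}"
          using Suc.IH[of p' q' x] nx by blast
        define c where "c j = (if j = 0 then a else c' (j - 1))" for j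
        have "\<forall>j<Suc M. c j \<noteq> c (Suc j) \<and> avail d (p j) (q j) = {c j, c (Suc j)}"
        proof (intro allI impI)
          fix j assume j: "j < Suc M"
          show "c j \<noteq> c (Suc j) \<and> avail d (p j) (q j) = {c j, c (Suc j)}"
          proof (cases j)
            case 0 then show ?thesis using c'(1) x Aeq A_def c_def by auto
          next
            case (Suc j') then show ?thesis using c'(3) j c_def p'_def q'_def by simp
          qed
        qed
        moreover have "c 0 = a" "c (Suc M) = b" using c_def c'(2) by simp_all
        ultimately have "\<exists>c. c 0 = a \<and> c (Suc M) = b \<and> (\<forall>j<Suc M. c j \<noteq> c (Suc j) \<and> avail d (p j) (q j) = {c j, c (Suc j)})" by blast
        then show ?thesis by (rule disjI2)
      qed
    qed
  qed
qed

lemma avail_mem: "x \<in> avail d p q \<longleftrightarrow> x \<le> d \<and> x \<noteq> p \<and> x \<noteq> q"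
  unfolding avail_def by simp

lemma upper:
  assumes l3: "l \<ge> 3" and d3: "d \<ge> 3" and uV: "u \<in> ck_vertices d l" and vV: "v \<in> ck_vertices d l"
  shows "\<exists>n \<le> 2*l-1. (u,v) \<in> ck_arcs d l ^^ n"
proof -
  note P = path[OF d3, of "l-1" "\<lambda>j. u!(Suc j)" "\<lambda>j. v!j" "u!(l-1)" "v!0"]
  show ?thesis
  proof (cases "\<exists>z. (\<forall>j<l-1. z j \<in> avail d (u!(Suc j)) (v!j)) \<and> (\<forall>j. Suc j < l-1 \<longrightarrow> z j \<noteq> z (Suc j)) \<and> z 0 \<noteq> u!(l-1) \<and> z (l-1-1) \<noteq> v!0")
    case True
    then obtain z where z: "\<forall>j<l-1. z j \<in> avail d (u!(Suc j)) (v!j)" "\<forall>j. Suc j < l-1 \<longrightarrow> z j \<noteq> z (Suc j)"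
      "z 0 \<noteq> u!(l-1)" "z (l-1-1) \<noteq> v!0" by blast
    have "(u, v) \<in> ck_arcs d l ^^ (l - 1 + l)"
    proof (rule glue[OF l3 _ _ uV vV])
      show "\<forall>j. j+1 < l \<longrightarrow> z j \<le> d" using z(1) by (auto simp: avail_mem)
      show "\<forall>j. j+2 < l \<longrightarrow> z j \<noteq> z (Suc j)" using z(2) by auto
      show "2 \<le> l \<longrightarrow> z 0 \<noteq> u!(l-1) \<and> z (l-2) \<noteq> v!0" using z(3,4) by (simp add: numeral_2_eq_2)
      show "\<forall>j. j+1 < l \<longrightarrow> z j \<noteq> u!(Suc j) \<and> z j \<noteq> v!(l - l + j)" using z(1) by (auto simp: avail_mem)
    qed (use l3 in auto)
    moreover have "l - 1 + l \<le> 2*l-1" by simp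
    ultimately show ?thesis by blast
  next
    case False
    then obtain c where c: "c 0 = u!(l-1)" "c (l-1) = v!0"
      "\<forall>j<l-1. c j \<noteq> c (Suc j) \<and> avail d (u!(Suc j)) (v!j) = {c j, c (Suc j)}" using P by blast
    have c1: "c j \<le> d \<and> c j \<noteq> u!(Suc j) \<and> c j \<noteq> v!j" if "j < l-1" for j
      using c(3) that by (metis avail_mem insertI1)
    have c2: "c (Suc j) \<le> d \<and> c (Suc j) \<noteq> u!(Suc j) \<and> c (Suc j) \<noteq> v!j" if "j < l-1" for j
    proof -
      have "c (Suc j) \<in> avail d (u!(Suc j)) (v!j)" using c(3) that by auto
      then show ?thesis by (simp add: avail_mem)
    qed
    have c3: "c j \<noteq> c (Suc j)" if "j < l-1" for j using c(3) that by auto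
    have "(u, v) \<in> ck_arcs d l ^^ (l - 1 + (l - 1))"
    proof (rule glue[OF l3 _ _ uV vV, where z="\<lambda>j. c (Suc j)"])
      show "\<forall>j. j+1 < l-1 \<longrightarrow> c (Suc j) \<le> d" using c2 by auto
      show "\<forall>j. j+2 < l-1 \<longrightarrow> c (Suc j) \<noteq> c (Suc (Suc j))" using c3 by auto
      have "c (l-2) \<noteq> c (Suc (l-2))" using c3[of "l-2"] l3 by simp
      moreover have "Suc (l-2) = l-1" using l3 by simp
      ultimately have A1: "c (l-2) \<noteq> v!0" using c(2) by simp
      have e: "Suc (l-1-2) = l-2" using l3 by simp
      have A2: "c (Suc (l-1-2)) \<noteq> v!0" unfolding e by (rule A1)
      have "c 1 \<noteq> u!(l-1)" using c3[of 0] c(1) l3 by simp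
      then show "2 \<le> l-1 \<longrightarrow> c (Suc 0) \<noteq> u!(l-1) \<and> c (Suc (l-1-2)) \<noteq> v!0" using A2 by simp
      show "l - 1 = 1 \<longrightarrow> u!(l-1) \<noteq> v!0" using l3 by linarith
      show "\<forall>j. j+1 < l-1 \<longrightarrow> c (Suc j) \<noteq> u!(Suc j) \<and> c (Suc j) \<noteq> v!(l - (l-1) + j)"
      proof (intro allI impI)
        fix j assume j: "j+1 < l-1"
        have "c (Suc j) \<noteq> v!(Suc j)" using c1[of "Suc j"] j by simp
        moreover have "l - (l-1) + j = Suc j" using l3 by simp
        ultimately show "c (Suc j) \<noteq> u!(Suc j) \<and> c (Suc j) \<noteq> v!(l - (l-1) + j)" using c2[of j] j by simp
      qed
      show "\<forall>i. l-1 \<le> i \<longrightarrow> i < l \<longrightarrow> u!i \<noteq> v!(i-(l-1))"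
      proof (intro allI impI)
        fix i assume "l-1 \<le> i" "i < l"
        then have "i = l-1" by simp
        moreover have "c 0 \<noteq> v!0" using c1[of 0] l3 by simp
        ultimately show "u!i \<noteq> v!(i-(l-1))" using c(1) by simp
      qed
    qed (use l3 in auto)
    moreover have "l - 1 + (l - 1) \<le> 2*l-1" by simp
    ultimately show ?thesis by blast
  qed
qed

lemma one_avail3: "\<exists>x\<le>(3::nat). x \<noteq> a \<and> x \<noteq> b \<and> x \<noteq> c"
proof -
  have "(a \<noteq> 0 \<and> b \<noteq> 0 \<and> c \<noteq> 0) \<or> (a \<noteq> 1 \<and> b \<noteq> 1 \<and> c \<noteq> 1) \<or> (a \<noteq> 2 \<and> b \<noteq> 2 \<and> c \<noteq> 2)
     \<or> (a \<noteq> 3 \<and> b \<noteq> 3 \<and> c \<noteq> 3)" by linarith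
  then show ?thesis
  proof (elim disjE)
    assume h: "a \<noteq> 0 \<and> b \<noteq> 0 \<and> c \<noteq> 0" show ?thesis by (rule exI[of _ 0]) (use h in simp)
  next
    assume h: "a \<noteq> 1 \<and> b \<noteq> 1 \<and> c \<noteq> 1" show ?thesis by (rule exI[of _ 1]) (use h in simp)
  next
    assume h: "a \<noteq> 2 \<and> b \<noteq> 2 \<and> c \<noteq> 2" show ?thesis by (rule exI[of _ 2]) (use h in simp)
  next
    assume h: "a \<noteq> 3 \<and> b \<noteq> 3 \<and> c \<noteq> 3" show ?thesis by (rule exI[of _ 3]) (use h in simp)
  qed
qed

lemma upper4:
  assumes uV: "u \<in> ck_vertices 3 4" and vV: "v \<in> ck_vertices 3 4"
  shows "\<exists>n \<le> 6. (u,v) \<in> ck_arcs 3 4 ^^ n"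
proof -
  have l1: "(4::nat) \<ge> 1" by simp
  note U = vertD[OF uV l1] and V = vertD[OF vV l1]
  show ?thesis
  proof (cases "u!3 = v!0")
    case True
    obtain x where x: "x \<le> 3" "x \<noteq> u!1" "x \<noteq> v!2" "x \<noteq> u!3" using one_avail3 by blast
    have "(u, v) \<in> ck_arcs 3 4 ^^ (4 - 1 + 2)"
    proof (rule glue[OF _ _ _ uV vV, where z="\<lambda>_. x"])
      show "\<forall>i. 2 \<le> i \<longrightarrow> i < 4 \<longrightarrow> u!i \<noteq> v!(i-2)"
      proof (intro allI impI)
        fix i :: nat assume "2 \<le> i" "i < 4"
        then have "i = 2 \<or> i = 3" by auto
        moreover have "u!2 \<noteq> u!3" using U(3)[of 2] by simp
        moreover have "v!0 \<noteq> v!1" using V(3)[of 0] by simp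
        ultimately show "u!i \<noteq> v!(i-2)" using True by auto
      qed
    qed (use x True in auto)
    then show ?thesis by (intro exI[of _ 5]) simp
  next
    case False
    note P = path[of 3 2 "\<lambda>j. u!(Suc j)" "\<lambda>j. v!(Suc j)" "u!3" "v!0", simplified]
    show ?thesis
    proof (cases "\<exists>z. (\<forall>j<2. z j \<in> avail 3 (u!(Suc j)) (v!(Suc j))) \<and> (\<forall>j. Suc j < 2 \<longrightarrow> z j \<noteq> z (Suc j)) \<and> z 0 \<noteq> u!3 \<and> z 1 \<noteq> v!0")
      case True
      then obtain z where z: "\<forall>j<2. z j \<in> avail 3 (u!(Suc j)) (v!(Suc j))" "\<forall>j. Suc j < 2 \<longrightarrow> z j \<noteq> z (Suc j)"
        "z 0 \<noteq> u!3" "z 1 \<noteq> v!0" by blast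
      have z0: "z 0 \<le> 3" "z 0 \<noteq> u!1" "z 0 \<noteq> v!1" using z(1) by (auto simp: avail_mem)
      have z1: "z 1 \<le> 3" "z 1 \<noteq> u!2" "z 1 \<noteq> v!2" using z(1)[rule_format, of 1] by (auto simp: avail_mem numeral_2_eq_2)
      have z01: "z 0 \<noteq> z 1" using z(2) by auto
      have "(u, v) \<in> ck_arcs 3 4 ^^ (4 - 1 + 3)"
      proof (rule glue[OF _ _ _ uV vV, where z=z])
        show "\<forall>j. j+1 < 3 \<longrightarrow> z j \<le> 3" using z0 z1 by (auto simp: less_Suc_eq numeral_3_eq_3)
        show "\<forall>j. j+2 < 3 \<longrightarrow> z j \<noteq> z (Suc j)" using z01 by (auto simp: numeral_3_eq_3)
        show "\<forall>j. j+1 < 3 \<longrightarrow> z j \<noteq> u!(Suc j) \<and> z j \<noteq> v!(4 - 3 + j)"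
          using z0 z1 by (auto simp: less_Suc_eq numeral_3_eq_3 numeral_2_eq_2)
        show "\<forall>i. 3 \<le> i \<longrightarrow> i < 4 \<longrightarrow> u!i \<noteq> v!(i-3)"
        proof (intro allI impI)
          fix i :: nat assume "3 \<le> i" "i < 4" then have "i = 3" by simp
          then show "u!i \<noteq> v!(i-3)" using False by simp
        qed
      qed (use z(3) z(4) in auto)
      then show ?thesis by (intro exI[of _ 6]) simp
    next
      case nz: False
      obtain c where c: "c 0 = u!3" "c 2 = v!0"
        "\<forall>j<2. c j \<noteq> c (Suc j) \<and> avail 3 (u!(Suc j)) (v!(Suc j)) = {c j, c (Suc j)}"
        using P nz by (auto simp: numeral_2_eq_2)
      have a0: "avail 3 (u!1) (v!1) = {c 0, c 1}" "c 0 \<noteq> c 1" using c(3)[rule_format, of 0] by auto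
      have a1: "avail 3 (u!2) (v!2) = {c 1, c 2}" "c 1 \<noteq> c 2" using c(3)[rule_format, of 1] by (auto simp: numeral_2_eq_2)
      have m0: "c 0 \<in> avail 3 (u!1) (v!1)" "c 1 \<in> avail 3 (u!1) (v!1)" using a0 by auto
      have m1: "c 1 \<in> avail 3 (u!2) (v!2)" "c 2 \<in> avail 3 (u!2) (v!2)" using a1 by auto
      have "(u, v) \<in> ck_arcs 3 4 ^^ (4 - 1 + 2)"
      proof (rule glue[OF _ _ _ uV vV, where z="\<lambda>_. c 1"])
        show "\<forall>i. 2 \<le> i \<longrightarrow> i < 4 \<longrightarrow> u!i \<noteq> v!(i-2)"
        proof (intro allI impI)
          fix i :: nat assume "2 \<le> i" "i < 4"
          then have "i = 2 \<or> i = 3" by auto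
          moreover have "u!2 \<noteq> v!0" using m1(2) c(2) by (simp add: avail_mem)
          moreover have "u!3 \<noteq> v!1" using m0(1) c(1) by (simp add: avail_mem)
          ultimately show "u!i \<noteq> v!(i-2)" by auto
        qed
      qed (use m0 m1 a0 a1 c(1) c(2) in \<open>auto simp: avail_mem\<close>)
      then show ?thesis by (intro exI[of _ 5]) simp
    qed
  qed
qed

lemma vert_map:
  assumes "l \<ge> 1" "\<forall>i<l. g i \<le> d" "\<forall>i. Suc i < l \<longrightarrow> g i \<noteq> g (Suc i)" "g (l-1) \<noteq> g 0"
  shows "map g [0..<l] \<in> ck_vertices d l"
proof -
  have ne: "map g [0..<l] \<noteq> []" using assms(1) by simp
  have "last (map g [0..<l]) = g (l-1)" using ne assms(1) by (simp add: last_conv_nth)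
  moreover have "hd (map g [0..<l]) = g 0" using ne assms(1) by (simp add: hd_conv_nth)
  moreover have "set (map g [0..<l]) \<subseteq> {0..d}" using assms(2) by auto
  ultimately show ?thesis unfolding ck_vertices_def using assms by auto
qed

lemma walk_vals:
  assumes l3: "l \<ge> 3" and uV: "map U [0..<l] \<in> ck_vertices d l"
    and w: "(map U [0..<l], map W [0..<l]) \<in> ck_arcs d l ^^ n"
  shows "\<exists>f. valid d l (l+n) f \<and> (\<forall>i<l. f i = U i) \<and> (\<forall>i<l. f (n+i) = W i)"
proof -
  obtain f where f: "valid d l (l+n) f" "ckw f 0 l = map U [0..<l]" "ckw f n l = map W [0..<l]"
    using valid_of_walk[OF l3 uV w] by blast
  have "\<forall>i<l. f i = U i"
  proof (intro allI impI)
    fix i assume i: "i < l"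
    have "ckw f 0 l ! i = map U [0..<l] ! i" using f(2) by simp
    then show "f i = U i" using i by simp
  qed
  moreover have "\<forall>i<l. f (n+i) = W i"
  proof (intro allI impI)
    fix i assume i: "i < l"
    have "ckw f n l ! i = map W [0..<l] ! i" using f(3) by simp
    then show "f (n+i) = W i" using i by simp
  qed
  ultimately show ?thesis using f(1) by blast
qed

definition Uo :: "nat \<Rightarrow> nat \<Rightarrow> nat" where "Uo l i = (if i = l - 1 then 2 else i mod 2)"
definition Wo :: "nat \<Rightarrow> nat" where "Wo i = (if i = 0 then 2 else i mod 2)"

lemma odd_verts:
  assumes "l \<ge> 3" "odd l" "d \<ge> 3"
  shows "map (Uo l) [0..<l] \<in> ck_vertices d l" "map Wo [0..<l] \<in> ck_vertices d l"
proof -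
  show "map (Uo l) [0..<l] \<in> ck_vertices d l"
  proof (rule vert_map)
    show "\<forall>i<l. Uo l i \<le> d" using assms unfolding Uo_def by auto
    show "\<forall>i. Suc i < l \<longrightarrow> Uo l i \<noteq> Uo l (Suc i)"
    proof (intro allI impI)
      fix i assume i: "Suc i < l"
      show "Uo l i \<noteq> Uo l (Suc i)"
      proof (cases "Suc i = l - 1")
        case True
        then have "odd i" using assms(1,2) i by presburger
        then show ?thesis using True i unfolding Uo_def by (simp add: odd_iff_mod_2_eq_one)
      next
        case False
        then show ?thesis using i unfolding Uo_def by (simp add: mod_Suc)
      qed
    qed
  qed (use assms in \<open>auto simp: Uo_def\<close>)
  show "map Wo [0..<l] \<in> ck_vertices d l"
  proof (rule vert_map)
    show "\<forall>i<l. Wo i \<le> d" using assms unfolding Wo_def by auto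
    show "\<forall>i. Suc i < l \<longrightarrow> Wo i \<noteq> Wo (Suc i)" unfolding Wo_def by (auto simp: mod_Suc)
    have "even (l - 1)" using assms by simp
    then show "Wo (l-1) \<noteq> Wo 0" using assms unfolding Wo_def by (auto simp: even_iff_mod_2_eq_zero)
  qed (use assms in auto)
qed

lemma odd_lower:
  assumes l3: "l \<ge> 3" and lo: "odd l" and d3: "d \<ge> 3" and dl: "d = 3 \<or> l = 3"
    and v: "valid d l (l+n) f" and fU: "\<forall>i<l. f i = Uo l i" and fW: "\<forall>i<l. f (n+i) = Wo i"
    and n: "n < 2*l-1"
  shows False
proof -
  have U: "f i = (if i = l - 1 then 2 else i mod 2)" if "i < l" for i using fU that unfolding Uo_def by simp
  have W: "f (n+i) = (if i = 0 then 2 else i mod 2)" if "i < l" for i using fW that unfolding Wo_def by simp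
  have W0: "f n = 2" using W[of 0] l3 by simp
  consider (a) "n = 0" | (b) "1 \<le> n" "n \<le> l-2" | (c) "n = l-1" | (d) "n = l" | (e) "n = 2*l-2"
    | (f) "l < n" "n < 2*l-2" using n l3 by linarith
  then show False
  proof cases
    case a
    then show False using U[of 0] W0 l3 by simp
  next
    case b
    then have "f n = n mod 2" using U[of n] l3 by simp
    then show False using W0 by simp
  next
    case c
    have "f 1 \<noteq> f l" by (rule valid_win[OF v]) (use c l3 in simp_all)
    moreover have "f 1 = 1" using U[of 1] l3 by simp
    moreover have "f l = 1" using W[of 1] c l3 by simp
    ultimately show False by simp
  next
    case d
    have "f (l-1) \<noteq> f (Suc (l-1))" by (rule valid_adj[OF v]) (use d l3 in simp_all)
    moreover have "f (l-1) = 2" using U[of "l-1"] l3 by simp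
    moreover have "Suc (l-1) = n" using d l3 by simp
    ultimately show False using W0 by simp
  next
    case e
    have "f (l-1) \<noteq> f (l-1+(l-1))" by (rule valid_win[OF v]) (use e l3 in simp_all)
    moreover have "f (l-1) = 2" using U[of "l-1"] l3 by simp
    moreover have "l-1+(l-1) = n" using e l3 by simp
    ultimately show False using W0 by simp
  next
    case f
    define m where "m = n - l + 1"
    have nm: "n = l - 1 + m" and m2: "2 \<le> m" and ml: "m \<le> l - 2" using f l3 unfolding m_def by auto
    show False
    proof (cases "even m")
      case True
      then have ml3: "m + 1 \<le> l - 2" using ml lo l3 by presburger
      have "f (m+1) \<noteq> f (m+1+(l-1))" by (rule valid_win[OF v]) (use nm ml3 l3 in simp_all)
      moreover have "f (m+1) = 1"
      proof -
        have "m+1 < l" "m+1 \<noteq> l-1" using ml3 l3 by auto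
        then have "f (m+1) = (m+1) mod 2" using U[of "m+1"] by simp
        moreover have "(m+1) mod 2 = 1" using True by presburger
        ultimately show ?thesis by simp
      qed
      moreover have "m+1+(l-1) = n + 1" using nm l3 by simp
      moreover have "f (n+1) = 1" using W[of 1] l3 by simp
      ultimately show False by simp
    next
      case False
      then have m3: "3 \<le> m" using m2 by presburger
      then have d3': "d = 3" using dl ml by auto
      have lm: "even (l - m)" using lo False ml by presburger
      have two: "f (l+j) = 2 \<or> f (l+j) = 3" if j: "j \<le> m - 2" for j
      proof -
        have A: "f (j+1) \<noteq> f (j+1+(l-1))" by (rule valid_win[OF v]) (use j nm ml l3 in simp_all)
        have A1: "f (j+1) = (j+1) mod 2" using U[of "j+1"] j ml l3 by simp
        have A2: "j+1+(l-1) = l+j" using l3 by simp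
        have B: "f (l+j) \<noteq> f (l+j+(l-1))" by (rule valid_win[OF v]) (use j nm ml m3 l3 in simp_all)
        have B2: "l+j+(l-1) = n + (l-m+j)" using nm ml l3 by simp
        have B1: "f (n + (l-m+j)) = (l-m+j) mod 2" using W[of "l-m+j"] j ml m3 l3 by simp
        have B3: "(l-m+j) mod 2 = j mod 2"
        proof -
          obtain k where k: "l - m = 2*k" using lm by (elim evenE)
          then have "l-m+j = j + 2*k" using ml by simp
          then show ?thesis by simp
        qed
        have C: "f (l+j) \<le> 3" using valid_bd[OF v, of "l+j"] d3' j nm ml l3 m3 by simp
        have H1: "f (l+j) \<noteq> (j+1) mod 2" using A[unfolded A2 A1] by auto
        have H2: "f (l+j) \<noteq> j mod 2" using B[unfolded B2 B1 B3] by auto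
        have P: "(j mod 2 = 0 \<and> (j+1) mod 2 = 1) \<or> (j mod 2 = 1 \<and> (j+1) mod 2 = 0)" by presburger
        then have "f (l+j) \<noteq> 0" "f (l+j) \<noteq> 1" using H1 H2 by auto
        then show ?thesis using C by linarith
      qed
      have alt: "f (l+j) = (if even j then 3 else 2)" if "j \<le> m - 2" for j
        using that
      proof (induction j)
        case 0
        have "f (l-1) \<noteq> f (Suc (l-1))" by (rule valid_adj[OF v]) (use l3 nm m2 in simp_all)
        moreover have "f (l-1) = 2" using U[of "l-1"] l3 by simp
        moreover have "Suc (l-1) = l" using l3 by simp
        ultimately show ?case using two[of 0] by simp
      next
        case (Suc j)
        have "f (l+j) \<noteq> f (Suc (l+j))" by (rule valid_adj[OF v]) (use Suc.prems nm ml l3 in simp_all)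
        moreover have "f (l+j) = (if even j then 3 else 2)" using Suc by simp
        ultimately show ?case using two[OF Suc.prems] by auto
      qed
      have "f (l+(m-2)) = 2" using alt[of "m-2"] False m3 by simp
      moreover have "f (l+(m-2)) \<noteq> f (Suc (l+(m-2)))" by (rule valid_adj[OF v]) (use nm ml m3 l3 in simp_all)
      moreover have "Suc (l+(m-2)) = n" using nm m3 l3 by simp
      ultimately show False using W0 by simp
    qed
  qed
qed

definition Ue :: "nat \<Rightarrow> nat \<Rightarrow> nat" where
  "Ue l i = (if i = 0 then 0 else if i = l-2 then 0 else if i = l-1 then 2 else if odd i then 1 else 2)"
definition We :: "nat \<Rightarrow> nat \<Rightarrow> nat" where
  "We l i = (if i = 0 then 2 else if i = 1 then 0 else if i = 2 then 3 else if i = l-2 then 0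
     else if i = l-1 then 1 else if odd i then 1 else 2)"

lemma Ue_mid: "1 \<le> i \<Longrightarrow> i \<le> l-3 \<Longrightarrow> Ue l i = (if odd i then 1 else 2)"
  unfolding Ue_def by auto
lemma We_mid: "3 \<le> i \<Longrightarrow> i \<le> l-3 \<Longrightarrow> We l i = (if odd i then 1 else 2)"
  unfolding We_def by auto
lemma Ue_l2: "l \<ge> 6 \<Longrightarrow> Ue l (l-2) = 0" unfolding Ue_def by auto
lemma Ue_l1: "l \<ge> 6 \<Longrightarrow> Ue l (l-1) = 2" unfolding Ue_def by auto
lemma We_l2: "l \<ge> 6 \<Longrightarrow> We l (l-2) = 0" unfolding We_def by auto
lemma We_l1: "l \<ge> 6 \<Longrightarrow> We l (l-1) = 1" unfolding We_def by auto

lemma par1: assumes "even (l::nat)" "l \<ge> 6" shows "odd (l-3)"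
proof -
  obtain k where k: "l = 2*k" using assms(1) by (elim evenE)
  have "l - 3 = 2*(k-2)+1" using k assms(2) by simp
  then show ?thesis by simp
qed
lemma par2: assumes "even (l::nat)" "l \<ge> 6" shows "odd (l-5)"
proof -
  obtain k where k: "l = 2*k" using assms(1) by (elim evenE)
  have "l - 5 = 2*(k-3)+1" using k assms(2) by simp
  then show ?thesis by simp
qed

lemma even_verts:
  assumes l6: "l \<ge> 6" and le: "even l" and d3: "d \<ge> 3"
  shows "map (Ue l) [0..<l] \<in> ck_vertices d l" "map (We l) [0..<l] \<in> ck_vertices d l"
proof -
  show "map (Ue l) [0..<l] \<in> ck_vertices d l"
  proof (rule vert_map)
    show "\<forall>i<l. Ue l i \<le> d" using d3 unfolding Ue_def by auto
    show "\<forall>i. Suc i < l \<longrightarrow> Ue l i \<noteq> Ue l (Suc i)"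
    proof (intro allI impI)
      fix i assume i: "Suc i < l"
      consider "i = 0" | "1 \<le> i" "Suc i \<le> l-3" | "Suc i = l-2" | "Suc i = l-1" using i by linarith
      then show "Ue l i \<noteq> Ue l (Suc i)"
      proof cases
        case 1 then show ?thesis using l6 unfolding Ue_def by auto
      next
        case 2 then show ?thesis using Ue_mid[of i l] Ue_mid[of "Suc i" l] by auto
      next
        case 3
        then have "i = l-3" "1 \<le> i" using l6 by auto
        then show ?thesis using Ue_mid[of i l] Ue_l2[OF l6] par1[OF le l6] 3 by simp
      next
        case 4
        then have "i = l-2" by simp
        then show ?thesis using Ue_l1[OF l6] Ue_l2[OF l6] 4 by simp
      qed
    qed
    show "Ue l (l-1) \<noteq> Ue l 0" using Ue_l1[OF l6] unfolding Ue_def by simp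
  qed (use l6 in simp)
  show "map (We l) [0..<l] \<in> ck_vertices d l"
  proof (rule vert_map)
    show "\<forall>i<l. We l i \<le> d" using d3 unfolding We_def by auto
    show "\<forall>i. Suc i < l \<longrightarrow> We l i \<noteq> We l (Suc i)"
    proof (intro allI impI)
      fix i assume i: "Suc i < l"
      consider "i = 0" | "i = 1" | "i = 2" | "3 \<le> i" "Suc i \<le> l-3" | "Suc i = l-2" | "Suc i = l-1" using i by linarith
      then show "We l i \<noteq> We l (Suc i)"
      proof cases
        case 1 then show ?thesis using l6 unfolding We_def by auto
      next
        case 2 then show ?thesis using l6 unfolding We_def by auto
      next
        case 3
        have "We l 2 = 3" using l6 unfolding We_def by simp
        moreover have "We l 3 = 1" using We_mid[of 3 l] l6 by simp
        ultimately show ?thesis using 3 by simp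
      next
        case 4 then show ?thesis using We_mid[of i l] We_mid[of "Suc i" l] by auto
      next
        case 5
        then have "i = l-3" "3 \<le> i" using l6 by auto
        then show ?thesis using We_mid[of i l] We_l2[OF l6] par1[OF le l6] 5 by simp
      next
        case 6
        then have "i = l-2" by simp
        then show ?thesis using We_l1[OF l6] We_l2[OF l6] 6 by simp
      qed
    qed
    show "We l (l-1) \<noteq> We l 0" using We_l1[OF l6] unfolding We_def by simp
  qed (use l6 in simp)
qed

lemma par3: assumes "even (l::nat)" "odd m" "m \<le> l-5" shows "even (l-1-m)"
proof -
  obtain a where a: "l = 2*a" using assms(1) by (elim evenE)
  obtain b where b: "m = 2*b+1" using assms(2) by (elim oddE)
  have "l-1-m = 2*(a-b-1)" using a b assms(3) by simp
  then show ?thesis by simp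
qed
lemma mcases: assumes "even (l::nat)" "l \<ge> 6" "2 \<le> m" "m \<le> l-2"
  shows "(even m \<and> m \<le> l-4) \<or> m = l-2 \<or> (odd m \<and> m \<le> l-5) \<or> m = l-3"
proof -
  obtain a where a: "l = 2*a" using assms(1) by (elim evenE)
  show ?thesis
  proof (cases "even m")
    case True
    then obtain b where b: "m = 2*b" by (elim evenE)
    have "m \<le> l-4 \<or> m = l-2" using a b assms(2,3,4) by presburger
    then show ?thesis using True by blast
  next
    case False
    then obtain b where b: "m = 2*b+1" by (elim oddE)
    have "m \<le> l-5 \<or> m = l-3" using a b assms(2,3,4) by presburger
    then show ?thesis using False by blast
  qed
qed

lemma even_lower:
  assumes l6: "l \<ge> 6" and le: "even l" and v: "valid 3 l (l+n) f"
    and fU: "\<forall>i<l. f i = Ue l i" and fW: "\<forall>i<l. f (n+i) = We l i" and n: "n < 2*l-1"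
  shows False
proof -
  have U0: "f 0 = 0" using fU l6 unfolding Ue_def by simp
  have Ul2: "f (l-2) = 0" using fU Ue_l2[OF l6] l6 by simp
  have Ul1: "f (l-1) = 2" using fU Ue_l1[OF l6] l6 by simp
  have Um: "f i = (if odd i then 1 else 2)" if "1 \<le> i" "i \<le> l-3" for i
    using fU Ue_mid[OF that] that l6 by simp
  have W0: "f n = 2" using fW[rule_format, of 0] l6 unfolding We_def by simp
  have W1: "f (n+1) = 0" using fW[rule_format, of 1] l6 unfolding We_def by simp
  have W2: "f (n+2) = 3" using fW[rule_format, of 2] l6 unfolding We_def by simp
  have Wl2: "f (n+(l-2)) = 0" using fW[rule_format, of "l-2"] We_l2[OF l6] l6 by simp
  have Wm: "f (n+i) = (if odd i then 1 else 2)" if "3 \<le> i" "i \<le> l-3" for i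
    using fW[rule_format, of i] We_mid[OF that] that l6 by simp
  have o3: "odd (l-3)" by (rule par1[OF le l6])
  have o5: "odd (l-5)" by (rule par2[OF le l6])
  consider (a) "n = 0" | (b) "1 \<le> n" "n \<le> l-2" | (c) "n = l-1" | (d) "n = l" | (e) "n = 2*l-2"
    | (f) "l < n" "n < 2*l-2" using n l6 by linarith
  then show False
  proof cases
    case a then show False using U0 W0 by simp
  next
    case b
    have fn1: "f (n+1) = Ue l (n+1)" using fU b l6 by simp
    consider "n+1 = l-2" | "n+1 \<le> l-3" | "n+1 = l-1" using b by linarith
    then show False
    proof cases
      case 1
      then have "n = l-3" by simp
      then have "f n = 1" using Um[of n] b o3 by simp
      then show False using W0 by simp
    next
      case 2
      then have "f (n+1) = (if odd (n+1) then 1 else 2)" using Um[of "n+1"] by simp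
      then show False using W1 by (simp split: if_splits)
    next
      case 3
      then have "f (n+1) = 2" using fn1 Ue_l1[OF l6] by simp
      then show False using W1 by simp
    qed
  next
    case c
    have "f (l-2) \<noteq> f (n+(l-2))" by (rule valid_win[OF v]) (use c l6 in simp_all)
    then show False using Ul2 Wl2 by simp
  next
    case d
    have "f (l-1) \<noteq> f n" by (rule valid_adj[OF v]) (use d l6 in simp_all)
    then show False using Ul1 W0 by simp
  next
    case e
    have "f (l-1) \<noteq> f n" by (rule valid_win[OF v]) (use e l6 in simp_all)
    then show False using Ul1 W0 by simp
  next
    case f
    define m where "m = n - l + 1"
    have nm: "n = l - 1 + m" and m2: "2 \<le> m" and ml: "m \<le> l - 2" using f l6 unfolding m_def by auto
    consider (f1) "even m" "m \<le> l-4" | (f2) "m = l-2" | (f3) "odd m" "m \<le> l-5" | (f4) "m = l-3"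
      using mcases[OF le l6 m2 ml] by blast
    then show False
    proof cases
      case f1
      have "f m \<noteq> f n" by (rule valid_win[OF v]) (use nm f1 m2 l6 in simp_all)
      moreover have "f m = 2" using Um[of m] f1 m2 by simp
      ultimately show False using W0 by simp
    next
      case f3
      have "f (l-1) \<noteq> f (n + (l-1-m))" by (rule valid_win[OF v]) (use nm f3 m2 l6 in simp_all)
      moreover have "even (l-1-m)" using par3[OF le f3] .
      moreover have "f (n + (l-1-m)) = (if odd (l-1-m) then 1 else 2)" using Wm[of "l-1-m"] f3 m2 l6 by simp
      ultimately show False using Ul1 by simp
    next
      case f4
      have "f (l-2) \<noteq> f (n+1)" by (rule valid_win[OF v]) (use nm f4 l6 in simp_all)
      then show False using Ul2 W1 by simp
    next
      case f2
      have n2: "n = 2*l-3" using nm f2 l6 by simp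
      have A: "f (l+j) \<noteq> f (j+1)" if "j \<le> l-4" for j
      proof -
        have "f (j+1) \<noteq> f (l+j)" by (rule valid_win[OF v]) (use that n2 l6 in simp_all)
        then show ?thesis by simp
      qed
      have B: "f (l+j) \<noteq> f (n+(j+2))" if "j \<le> l-4" for j
        by (rule valid_win[OF v]) (use that n2 l6 in simp_all)
      have C: "f (l+j) \<le> 3" if "j \<le> l-4" for j
        using valid_bd[OF v, of "l+j"] that n2 l6 by simp
      have D: "f (l+j) \<noteq> f (Suc (l+j))" if "j \<le> l-4" for j
        by (rule valid_adj[OF v]) (use that n2 l6 in simp_all)
      have alt: "f (l+j) = (if even j then 0 else 3)" if "j \<le> l-5" for j
        using that
      proof (induction j)
        case 0
        have "f (l-1) \<noteq> f (Suc (l-1))" by (rule valid_adj[OF v]) (use n2 l6 in simp_all)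
        moreover have "Suc (l-1) = l" using l6 by simp
        ultimately have "f l \<noteq> 2" using Ul1 by simp
        moreover have "f l \<noteq> 1" using A[of 0] Um[of 1] l6 by simp
        moreover have "f l \<noteq> 3" using B[of 0] W2 l6 by simp
        moreover have "f l \<le> 3" using C[of 0] l6 by simp
        ultimately show ?case by simp
      next
        case (Suc j)
        have j: "Suc j \<le> l - 4" using Suc.prems by simp
        have IH: "f (l+j) = (if even j then 0 else 3)" using Suc by simp
        have a1: "f (l + Suc j) \<noteq> (if odd (j+2) then 1 else 2)" using A[OF j] Um[of "j+2"] Suc.prems by simp
        have b1: "f (l + Suc j) \<noteq> (if odd (j+3) then 1 else 2)"
          using B[OF j] Wm[of "j+3"] Suc.prems by (simp add: numeral_3_eq_3 numeral_2_eq_2)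
        have c1: "f (l + Suc j) \<le> 3" using C[OF j] by simp
        have d1: "f (l + j) \<noteq> f (l + Suc j)" using D[of j] Suc.prems by simp
        show ?case
        proof (cases "even j")
          case True
          then show ?thesis using a1 b1 c1 d1 IH by auto
        next
          case False
          then show ?thesis using a1 b1 c1 d1 IH by auto
        qed
      qed
      have j4: "l - 4 \<le> l - 4" by simp
      have e3: "l-4+1 = l-3" using l6 by simp
      have "f (l-3) = 1" using Um[of "l-3"] o3 l6 by simp
      then have "f (l+(l-4)) \<noteq> 1" using A[OF j4, unfolded e3] by simp
      moreover have "f (l+(l-4)) \<noteq> 0"
      proof -
        have e2: "l-4+2 = l-2" using l6 by simp
        show ?thesis using B[OF j4, unfolded e2] Wl2 by simp
      qed
      moreover have "f (l+(l-4)) \<noteq> 2"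
      proof -
        have e1: "Suc (l+(l-4)) = n" using n2 l6 by simp
        show ?thesis using D[OF j4, unfolded e1] W0 by simp
      qed
      moreover have "f (l+(l-4)) \<noteq> 3"
      proof -
        have "f (l+(l-5)) = 3" using alt[of "l-5"] o5 by simp
        moreover have e: "Suc (l+(l-5)) = l+(l-4)" using l6 by simp
        moreover have "l - 5 \<le> l - 4" by simp
        ultimately show ?thesis using D[of "l-5", unfolded e] by auto
      qed
      moreover have "f (l+(l-4)) \<le> 3" using C[OF j4] .
      ultimately show False by simp
    qed
  qed
qed

lemma l4_verts: "[0,1,2,1] \<in> ck_vertices 3 4" "[2,0,1,0] \<in> ck_vertices 3 4"
  unfolding ck_vertices_def by (auto simp: less_Suc_eq numeral_eq_Suc)

lemma l4_lower:
  assumes w: "([0,1,2,1], [2,0,1,0]) \<in> ck_arcs 3 4 ^^ n" and n: "n < 6"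
  shows False
proof -
  obtain f where f: "valid 3 4 (4+n) f" "ckw f 0 4 = [0,1,2,1]" "ckw f n 4 = [2,0,1,0]"
    using valid_of_walk[OF _ l4_verts(1) w] by auto
  have "ckw f 0 4 ! 0 = 0" "ckw f 0 4 ! 1 = 1" "ckw f 0 4 ! 2 = 2" "ckw f 0 4 ! 3 = 1" using f(2) by simp_all
  then have u: "f 0 = 0" "f 1 = 1" "f 2 = 2" "f 3 = 1" by (simp_all add: numeral_eq_Suc)
  have "ckw f n 4 ! 0 = 2" "ckw f n 4 ! 1 = 0" "ckw f n 4 ! 2 = 1" "ckw f n 4 ! 3 = 0" using f(3) by simp_all
  then have v: "f n = 2" "f (n+1) = 0" "f (n+2) = 1" "f (n+3) = 0" by (simp_all add: numeral_eq_Suc)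
  have "n = 0 \<or> n = 1 \<or> n = 2 \<or> n = 3 \<or> n = 4 \<or> n = 5" using n by linarith
  then show False
  proof (elim disjE)
    assume "n = 0" then show False using u v by simp
  next
    assume "n = 1" then show False using u v by simp
  next
    assume "n = 2" then show False using u v by simp
  next
    assume "n = 3" then show False using u v by simp
  next
    assume n4: "n = 4"
    have "f 3 \<noteq> f 6" by (rule valid_win[OF f(1)]) (use n4 in simp_all)
    then show False using u v n4 by simp
  next
    assume n5: "n = 5"
    have "f 2 \<noteq> f 5" by (rule valid_win[OF f(1)]) (use n5 in simp_all)
    then show False using u v n5 by simp
  qed
qed

lemma lower_odd_pair:
  assumes l3: "l \<ge> 3" and lo: "odd l" and d3: "d \<ge> 3" and dl: "d = 3 \<or> l = 3"
  shows "\<forall>n<2*l-1. (map (Uo l) [0..<l], map Wo [0..<l]) \<notin> ck_arcs d l ^^ n"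
proof (intro allI impI notI)
  fix n assume n: "n < 2*l-1" and w: "(map (Uo l) [0..<l], map Wo [0..<l]) \<in> ck_arcs d l ^^ n"
  obtain f where f: "valid d l (l+n) f" "\<forall>i<l. f i = Uo l i" "\<forall>i<l. f (n+i) = Wo i"
    using walk_vals[OF l3 odd_verts(1)[OF l3 lo d3] w] by blast
  show False by (rule odd_lower[OF l3 lo d3 dl f n])
qed

lemma lower_even_pair:
  assumes l6: "l \<ge> 6" and le: "even l"
  shows "\<forall>n<2*l-1. (map (Ue l) [0..<l], map (We l) [0..<l]) \<notin> ck_arcs 3 l ^^ n"
proof (intro allI impI notI)
  fix n assume n: "n < 2*l-1" and w: "(map (Ue l) [0..<l], map (We l) [0..<l]) \<in> ck_arcs 3 l ^^ n"
  have l3: "l \<ge> 3" using l6 by simp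
  have d3: "(3::nat) \<ge> 3" by simp
  obtain f where f: "valid 3 l (l+n) f" "\<forall>i<l. f i = Ue l i" "\<forall>i<l. f (n+i) = We l i"
    using walk_vals[OF l3 even_verts(1)[OF l6 le d3] w] by blast
  show False by (rule even_lower[OF l6 le f n])
qed

theorem proposition1:
  shows "(\<forall>l::nat. l \<ge> 3 \<and> l \<noteq> 4 \<longrightarrow> ck_diameter 3 l = enat (2 * l - 1))
       \<and> (\<forall>d::nat. d \<ge> 3 \<longrightarrow> ck_diameter d 3 = enat 5)
       \<and> ck_diameter 3 4 = enat 6"
proof (intro conjI allI impI)
  fix l :: nat assume a: "l \<ge> 3 \<and> l \<noteq> 4"
  then have l3: "l \<ge> 3" by simp
  have d3: "(3::nat) \<ge> 3" by simp
  show "ck_diameter 3 l = enat (2 * l - 1)"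
  proof (cases "odd l")
    case True
    show ?thesis
      by (rule diam_eq[OF upper[OF l3 d3] odd_verts[OF l3 True d3] lower_odd_pair[OF l3 True d3]]) simp_all
  next
    case False
    then have l6: "l \<ge> 6" using a by presburger
    show ?thesis
      by (rule diam_eq[OF upper[OF l3 d3] even_verts[OF l6 _ d3] lower_even_pair[OF l6]]) (use False in simp_all)
  qed
next
  fix d :: nat assume d3: "d \<ge> 3"
  have l3: "(3::nat) \<ge> 3" and o3: "odd (3::nat)" by simp_all
  have "ck_diameter d 3 = enat (2*3-1)"
    by (rule diam_eq[OF upper[OF l3 d3] odd_verts[OF l3 o3 d3] lower_odd_pair[OF l3 o3 d3]]) simp_all
  then show "ck_diameter d 3 = enat 5" by simp
next
  show "ck_diameter 3 4 = enat 6"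
  proof (rule diam_eq[OF upper4 l4_verts])
    show "\<forall>n<6. ([0, 1, 2, 1], [2, 0, 1, 0]) \<notin> ck_arcs 3 4 ^^ n"
    proof (intro allI impI notI)
      fix n :: nat assume "n < 6" "([0, 1, 2, 1], [2, 0, 1, 0]) \<in> ck_arcs 3 4 ^^ n"
      then show False using l4_lower by blast
    qed
  qed
qed

end
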